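(* Let $X=\{x_j:j\in J\}\subset\mathbb{R}^2$ be finite with $n=|J|$, quadratic min-power centre $s^*$, centroid $M$, and let $r\in J$ be such that $x_r$ is a point of $X$ farthest from $M$. Then $\|M_r-x_r\|\leq\|s^*-x_r\|$.
   Context: $s^*$ is the unique minimiser of $P(s)=\sum_{i\in J}\|s-x_i\|^2+\max_{i\in J}\|s-x_i\|^2$; $M=\frac1n\sum_ix_i$; $M_r=\frac{1}{n+1}\big(x_r+\sum_{i\in J}x_i\big)$. *)

theory Defs
  imports "HOL-Analysis.Analysis"
begin

definition qmp_P :: "'j set \<Rightarrow> ('j \<Rightarrow> real^2) \<Rightarrow> real^2 \<Rightarrow> real" where
  "qmp_P J x s = (\<Sum>i\<in>J. (norm (s - x i))\<^sup>2) + Max ((\<lambda>i. (norm (s - x i))\<^sup>2) ` J)"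

definition centroid :: "'j set \<Rightarrow> ('j \<Rightarrow> real^2) \<Rightarrow> real^2" where
  "centroid J x = (1 / real (card J)) *\<^sub>R (\<Sum>i\<in>J. x i)"

definition centroid_r :: "'j set \<Rightarrow> ('j \<Rightarrow> real^2) \<Rightarrow> 'j \<Rightarrow> real^2" where
  "centroid_r J x r = (1 / (real (card J) + 1)) *\<^sub>R (x r + (\<Sum>i\<in>J. x i))"

end

theory Submission
  imports Defs
begin

lemma sq_shift:
  fixes s v y :: "'a::real_inner"
  shows "(norm (s - e *\<^sub>R v - y))^2 = (norm (s - y))^2 - 2*e*(v \<bullet> (s-y)) + e^2*(v\<bullet>v)"
proof -
  have "s - e *\<^sub>R v - y = (s - y) - e *\<^sub>R v" by (simp add: algebra_simps)
  then have "(norm (s - e *\<^sub>R v - y))^2 = ((s - y) - e *\<^sub>R v) \<bullet> ((s - y) - e *\<^sub>R v)"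
    by (metis power2_norm_eq_inner)
  also have "\<dots> = (s-y)\<bullet>(s-y) - 2*e*(v \<bullet> (s-y)) + e^2*(v\<bullet>v)"
    by (simp add: inner_diff_left inner_diff_right inner_commute[of v s] inner_commute[of y v] power2_eq_square algebra_simps)
  finally show ?thesis by (simp add: power2_norm_eq_inner)
qed

theorem lemma9:
  fixes J :: "'j set" and x :: "'j \<Rightarrow> real^2" and s :: "real^2" and r :: 'j
  assumes "finite J" and "J \<noteq> {}" and "inj_on x J"
    and "\<forall>t. qmp_P J x s \<le> qmp_P J x t"
    and "r \<in> J"
    and "\<forall>j\<in>J. norm (x j - centroid J x) \<le> norm (x r - centroid J x)"
  shows "norm (centroid_r J x r - x r) \<le> norm (s - x r)"
proof -
  define n where "n = real (card J)"
  define S where "S = (\<Sum>i\<in>J. x i)"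
  define M where "M = centroid J x"
  define Mr where "Mr = centroid_r J x r"
  define v where "v = x r - M"
  have npos: "n > 0" using assms(1,2) by (simp add: n_def card_gt_0_iff)
  have SM: "S = n *\<^sub>R M" using npos by (simp add: M_def centroid_def S_def n_def)
  have SMr: "x r + S = (n+1) *\<^sub>R Mr"
  proof -
    have "n + 1 \<noteq> 0" using npos by simp
    then show ?thesis by (simp add: Mr_def centroid_r_def S_def n_def)
  qed
  have key: "\<forall>i\<in>J. v \<bullet> (x r - x i) \<ge> 0"
  proof
    fix i assume i: "i \<in> J"
    have "x r - x i = v - (x i - M)" by (simp add: v_def)
    hence "v \<bullet> (x r - x i) = v \<bullet> v - v \<bullet> (x i - M)" by (simp add: inner_diff_right inner_add_right)
    moreover have "v \<bullet> (x i - M) \<le> norm v * norm (x i - M)" by (rule norm_cauchy_schwarz)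
    moreover have "norm (x i - M) \<le> norm v" using assms(6) i by (simp add: M_def v_def)
    moreover have "norm v * norm (x i - M) \<le> norm v * norm v"
      using calculation(3) by (simp add: mult_left_mono)
    moreover have "norm v * norm v = v \<bullet> v" by (simp add: norm_eq_sqrt_inner)
    ultimately show "v \<bullet> (x r - x i) \<ge> 0" by linarith
  qed
  have h: "v \<bullet> (s - Mr) \<le> 0"
  proof (rule ccontr)
    assume nt: "\<not> ?thesis"
    define d where "d = v \<bullet> (s - Mr)"
    have dpos: "d > 0" using nt d_def by simp
    have "v \<noteq> 0" using dpos d_def by auto
    hence vv: "v \<bullet> v > 0" by simp
    define e where "e = d / (v \<bullet> v)"
    have epos: "e > 0" using dpos vv by (simp add: e_def)
    have evv: "e * (v \<bullet> v) = d" using vv by (simp add: e_def)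
    define t where "t = s - e *\<^sub>R v"
    let ?f = "\<lambda>u i. (norm (u - x i))^2"
    have fin: "finite (?f t ` J)" "?f t ` J \<noteq> {}" using assms(1,2) by auto
    obtain i0 where i0: "i0 \<in> J" "Max (?f t ` J) = ?f t i0"
      using Max_in[OF fin] by auto
    have ms: "Max (?f s ` J) \<ge> ?f s i0" using assms(1) i0(1) by (intro Max_ge) auto
    have pt: "\<And>i. ?f t i = ?f s i - 2*e*(v \<bullet> (s - x i)) + e^2*(v\<bullet>v)"
      unfolding t_def by (rule sq_shift)
    define A where "A = (\<Sum>i\<in>J. v \<bullet> (s - x i))"
    have A: "A = n * (v \<bullet> s) - v \<bullet> S"
      by (simp add: A_def S_def inner_diff_right sum_subtractf inner_sum_right n_def)
    have sumt: "(\<Sum>i\<in>J. ?f t i) = (\<Sum>i\<in>J. ?f s i) - 2*e*A + n*(e^2*(v\<bullet>v))"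
      by (simp add: pt sum.distrib sum_subtractf A_def sum_distrib_left n_def)
    have Pt: "qmp_P J x t = (\<Sum>i\<in>J. ?f t i) + ?f t i0"
      unfolding qmp_P_def using i0(2) by (simp add: norm_minus_commute)
    have Ps: "qmp_P J x s \<ge> (\<Sum>i\<in>J. ?f s i) + ?f s i0"
      unfolding qmp_P_def using ms by (simp add: norm_minus_commute)
    have id: "A + v \<bullet> (s - x i0) = (n+1) * d + v \<bullet> (x r - x i0)"
    proof -
      have "(n+1) * d = (n+1) * (v \<bullet> s) - v \<bullet> ((n+1) *\<^sub>R Mr)"
        by (simp add: d_def inner_diff_right algebra_simps)
      also have "\<dots> = (n+1) * (v \<bullet> s) - v \<bullet> (x r + S)" by (simp add: SMr)
      finally show ?thesis by (simp add: A inner_diff_right inner_add_right algebra_simps)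
    qed
    have ge: "A + v \<bullet> (s - x i0) \<ge> (n+1) * d" using id key i0(1) by auto
    have "qmp_P J x t - qmp_P J x s \<le> - 2*e*(A + v \<bullet> (s - x i0)) + (n+1)*(e^2*(v\<bullet>v))"
      using Pt Ps sumt pt[of i0] by (simp add: algebra_simps)
    also have "\<dots> \<le> - 2*e*((n+1)*d) + (n+1)*(e*d)"
    proof -
      have "2*e*((n+1)*d) \<le> 2*e*(A + v \<bullet> (s - x i0))" using ge epos by simp
      moreover have "e^2*(v\<bullet>v) = e*d" using evv by (simp add: power2_eq_square)
      ultimately show ?thesis by (simp add: algebra_simps)
    qed
    also have "\<dots> = - ((n+1)*(e*d))" by (simp add: algebra_simps)
    also have "\<dots> < 0" using npos epos dpos by simp
    finally have "qmp_P J x t < qmp_P J x s" by simp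
    thus False using assms(4) by (meson not_less)
  qed
  have Mrx: "Mr - x r = - (n/(n+1)) *\<^sub>R v"
  proof -
    have n1: "n + 1 \<noteq> 0" using npos by simp
    have "(n+1) *\<^sub>R (Mr - x r) = S - n *\<^sub>R x r" using SMr by (simp add: algebra_simps)
    also have "\<dots> = - n *\<^sub>R v"
      by (simp add: SM v_def algebra_simps)
    also have "\<dots> = (n+1) *\<^sub>R (- (n/(n+1)) *\<^sub>R v)"
      using n1 by simp
    finally show ?thesis by (rule scaleR_left_imp_eq[OF n1])
  qed
  have "(s - x r) \<bullet> (s - x r) = (s - Mr) \<bullet> (s - Mr) + (Mr - x r) \<bullet> (Mr - x r) + 2 * ((s - Mr) \<bullet> (Mr - x r))"
  proof -
    have e1: "s - x r = (s - Mr) + (Mr - x r)" by simp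
    have "((s - Mr) + (Mr - x r)) \<bullet> ((s - Mr) + (Mr - x r)) = (s - Mr) \<bullet> (s - Mr) + (Mr - x r) \<bullet> (Mr - x r) + 2 * ((s - Mr) \<bullet> (Mr - x r))"
      unfolding inner_add_left inner_add_right inner_commute[of "Mr - x r" "s - Mr"] by simp
    then show ?thesis by (simp only: e1[symmetric])
  qed
  moreover have "(s - Mr) \<bullet> (Mr - x r) \<ge> 0"
  proof -
    have "(s - Mr) \<bullet> (Mr - x r) = - (n/(n+1)) * (v \<bullet> (s - Mr))"
      by (simp add: Mrx inner_commute)
    moreover have "n/(n+1) \<ge> 0" using npos by simp
    moreover have "(n/(n+1)) * (v \<bullet> (s - Mr)) \<le> 0" using h npos by (intro mult_nonneg_nonpos) auto
    ultimately show ?thesis by linarith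
  qed
  moreover have "(s - Mr) \<bullet> (s - Mr) \<ge> 0" by simp
  ultimately have "(Mr - x r) \<bullet> (Mr - x r) \<le> (s - x r) \<bullet> (s - x r)" by linarith
  thus ?thesis by (simp add: Mr_def norm_le)
qed

end
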